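(* Let $G$ be a group definable in a model $M$ of an NIP theory, and let $\mu$ be a translation-invariant Keisler measure on the definable subsets of $G$. Then for every $g\in G$, the translation $U\mapsto g\cdot U$ has entropy zero with respect to $\mu$.
   Context: A Keisler measure on the definable subsets of $G$ (with parameters from $M$) is a finitely additive probability measure on them; invariance means $\mu(gU)=\mu(U)$ for all $g\in G$ and definable $U\subseteq G$. Entropy is the measure-theoretic (Kolmogorov–Sinai) entropy: for a finite partition $P$, $h(\tau,P)=\lim_n\frac1n H(\bigvee_{i=0}^{n-1}\tau^{-i}P)$ with $H(Q)=-\sum_{C\in Q}\mu(C)\log\mu(C)$, and the entropy of $\tau$ is the supremum over partitions. *)

theory Defs
  imports Complex_Main "HOL-Algebra.Group"
begin

text \<open>A first-order structure M with universe the type 'a and a relational language: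
  relation symbols of type 'r, arity ar, interpretation Rel (tuples as lists).
  (Function symbols and constants are represented by their graphs; this does not
  change the definable sets.)  Points of M^n are lists of length n.\<close>

inductive definable :: "('r \<Rightarrow> nat) \<Rightarrow> ('r \<Rightarrow> 'a list set) \<Rightarrow> nat \<Rightarrow> 'a list set \<Rightarrow> bool"
  for ar :: "'r \<Rightarrow> nat" and Rel :: "'r \<Rightarrow> 'a list set" where
  atom: "definable ar Rel (ar r) (Rel r \<inter> {xs. length xs = ar r})"
| diag: "i < n \<Longrightarrow> j < n \<Longrightarrow> definable ar Rel n {xs. length xs = n \<and> xs ! i = xs ! j}"
| param: "definable ar Rel 1 {[c]}"
| compl: "definable ar Rel n D \<Longrightarrow> definable ar Rel n ({xs. length xs = n} - D)"
| inter: "definable ar Rel n A \<Longrightarrow> definable ar Rel n B \<Longrightarrow> definable ar Rel n (A \<inter> B)"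
| cyl: "definable ar Rel n D \<Longrightarrow>
        definable ar Rel (Suc n) {xs. length xs = Suc n \<and> take n xs \<in> D}"
| perm: "definable ar Rel n D \<Longrightarrow> bij_betw p {..<n} {..<n} \<Longrightarrow>
        definable ar Rel n {xs. length xs = n \<and> map (\<lambda>i. xs ! p i) [0..<n] \<in> D}"
| proj: "definable ar Rel (Suc n) D \<Longrightarrow>
        definable ar Rel n {xs. length xs = n \<and> (\<exists>a. xs @ [a] \<in> D)}"

definition shatters :: "'b set set \<Rightarrow> 'b set \<Rightarrow> bool" where
  "shatters F A \<longleftrightarrow> (\<forall>B \<subseteq> A. \<exists>S \<in> F. S \<inter> A = B)"

definition NIP :: "('r \<Rightarrow> nat) \<Rightarrow> ('r \<Rightarrow> 'a list set) \<Rightarrow> bool" where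
  "NIP ar Rel \<longleftrightarrow>
     (\<forall>n m D. definable ar Rel (n + m) D \<longrightarrow>
        (\<exists>d::nat. \<forall>A. finite A \<and>
           shatters {{xs. length xs = n \<and> xs @ ys \<in> D} | ys. length ys = m} A
           \<longrightarrow> card A \<le> d))"

definition definable_group ::
  "('r \<Rightarrow> nat) \<Rightarrow> ('r \<Rightarrow> 'a list set) \<Rightarrow> nat \<Rightarrow> 'a list monoid \<Rightarrow> bool" where
  "definable_group ar Rel n Gr \<longleftrightarrow>
     group Gr \<and> carrier Gr \<subseteq> {xs. length xs = n} \<and>
     definable ar Rel n (carrier Gr) \<and>
     definable ar Rel (n + n + n)
       {xs @ ys @ zs | xs ys zs. xs \<in> carrier Gr \<and> ys \<in> carrier Gr \<and> zs = xs \<otimes>\<^bsub>Gr\<^esub> ys}"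

definition def_subset ::
  "('r \<Rightarrow> nat) \<Rightarrow> ('r \<Rightarrow> 'a list set) \<Rightarrow> nat \<Rightarrow> 'a list monoid \<Rightarrow> 'a list set \<Rightarrow> bool" where
  "def_subset ar Rel n Gr U \<longleftrightarrow> definable ar Rel n U \<and> U \<subseteq> carrier Gr"

definition keisler_measure ::
  "('r \<Rightarrow> nat) \<Rightarrow> ('r \<Rightarrow> 'a list set) \<Rightarrow> nat \<Rightarrow> 'a list monoid \<Rightarrow> ('a list set \<Rightarrow> real) \<Rightarrow> bool" where
  "keisler_measure ar Rel n Gr \<mu> \<longleftrightarrow>
     \<mu> (carrier Gr) = 1 \<and>
     (\<forall>U. def_subset ar Rel n Gr U \<longrightarrow> 0 \<le> \<mu> U) \<and>
     (\<forall>U V. def_subset ar Rel n Gr U \<and> def_subset ar Rel n Gr V \<and> U \<inter> V = {}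
        \<longrightarrow> \<mu> (U \<union> V) = \<mu> U + \<mu> V)"

definition translate :: "'a list monoid \<Rightarrow> 'a list \<Rightarrow> 'a list set \<Rightarrow> 'a list set" where
  "translate Gr g U = (\<lambda>x. g \<otimes>\<^bsub>Gr\<^esub> x) ` U"

definition invariant_measure ::
  "('r \<Rightarrow> nat) \<Rightarrow> ('r \<Rightarrow> 'a list set) \<Rightarrow> nat \<Rightarrow> 'a list monoid \<Rightarrow> ('a list set \<Rightarrow> real) \<Rightarrow> bool" where
  "invariant_measure ar Rel n Gr \<mu> \<longleftrightarrow>
     (\<forall>g U. g \<in> carrier Gr \<and> def_subset ar Rel n Gr U \<longrightarrow> \<mu> (translate Gr g U) = \<mu> U)"

definition def_partition ::
  "('r \<Rightarrow> nat) \<Rightarrow> ('r \<Rightarrow> 'a list set) \<Rightarrow> nat \<Rightarrow> 'a list monoid \<Rightarrow> 'a list set set \<Rightarrow> bool" where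
  "def_partition ar Rel n Gr P \<longleftrightarrow>
     finite P \<and> (\<forall>C \<in> P. def_subset ar Rel n Gr C) \<and> \<Union>P = carrier Gr \<and> pairwise disjnt P"

text \<open>Join of tau^{-i} P for i < k, where tau(U) = g U, so tau^{-i}(C) = g^{-i} C.\<close>
definition join_iter :: "'a list monoid \<Rightarrow> 'a list \<Rightarrow> 'a list set set \<Rightarrow> nat \<Rightarrow> 'a list set set" where
  "join_iter Gr g P k =
     {carrier Gr \<inter> (\<Inter>i \<in> {..<k}. translate Gr (inv\<^bsub>Gr\<^esub> g [^]\<^bsub>Gr\<^esub> i) (f i)) | f. \<forall>i<k. f i \<in> P}"

definition part_entropy :: "('a list set \<Rightarrow> real) \<Rightarrow> 'a list set set \<Rightarrow> real" where
  "part_entropy \<mu> Q = - (\<Sum>C \<in> Q. if \<mu> C = 0 then 0 else \<mu> C * ln (\<mu> C))"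

definition zero_entropy ::
  "('r \<Rightarrow> nat) \<Rightarrow> ('r \<Rightarrow> 'a list set) \<Rightarrow> nat \<Rightarrow> 'a list monoid \<Rightarrow> ('a list set \<Rightarrow> real) \<Rightarrow> 'a list \<Rightarrow> bool" where
  "zero_entropy ar Rel n Gr \<mu> g \<longleftrightarrow>
     (\<forall>P. def_partition ar Rel n Gr P \<longrightarrow>
        (\<lambda>k. part_entropy \<mu> (join_iter Gr g P k) / real k) \<longlonglongrightarrow> 0)"

end

theory Submission
  imports Defs
begin



lemma def_len: "definable ar Rel n D \<Longrightarrow> D \<subseteq> {xs. length xs = n}"
  by (induction rule: definable.induct) auto

lemma rot_eq: "length ws = b + a \<Longrightarrow> rotate b ws = drop b ws @ take b ws"
proof (cases "a = 0")
  case True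
  assume "length ws = b + a"
  then show ?thesis using True by (simp add: rotate_drop_take)
next
  case False
  assume "length ws = b + a"
  then show ?thesis using False by (simp add: rotate_drop_take)
qed

lemma modinj: "(i + a) mod N = (j + a) mod N \<Longrightarrow> i < (N::nat) \<Longrightarrow> j < N \<Longrightarrow> i = j"
proof (induction i j rule: linorder_wlog)
  case (le i j)
  then have "N dvd (j + a) - (i + a)" using mod_eq_dvd_iff_nat[of "i + a" "j + a" N] by simp
  then have "N dvd j - i" by simp
  moreover have "j - i < N" using le by simp
  ultimately have "j - i = 0" using dvd_imp_le by (metis leD neq0_conv)
  then show ?case using le by simp
next
  case (sym a b) then show ?case by metis
qed

lemma bij_rot: "bij_betw (\<lambda>i. (i + a) mod N) {..<N} {..<(N::nat)}"
proof (cases "N = 0")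
  case True then show ?thesis by (simp add: bij_betw_def)
next
  case False
  have inj: "inj_on (\<lambda>i. (i + a) mod N) {..<N}"
  proof (rule inj_onI)
    fix i j assume i: "i \<in> {..<N}" and j: "j \<in> {..<N}" and e: "(i + a) mod N = (j + a) mod N"
    show "i = j" using modinj[OF e] i j by simp
  qed
  moreover have "(\<lambda>i. (i + a) mod N) ` {..<N} \<subseteq> {..<N}" using False by auto
  ultimately show ?thesis
    by (simp add: bij_betw_def endo_inj_surj)
qed

lemma def_rotate:
  assumes "definable ar Rel N D"
  shows "definable ar Rel N {ws. length ws = N \<and> rotate a ws \<in> D}"
proof -
  have "definable ar Rel N {xs. length xs = N \<and> map (\<lambda>i. xs ! ((i + a) mod N)) [0..<N] \<in> D}"
    using definable.perm[OF assms bij_rot] .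
  moreover have "\<And>xs. length xs = N \<Longrightarrow> map (\<lambda>i. xs ! ((i + a) mod N)) [0..<N] = rotate a xs"
    by (rule nth_equalityI) (auto simp: nth_rotate add.commute)
  ultimately show ?thesis
    by (smt (verit, best) Collect_cong)
qed

lemma def_swap:
  assumes "definable ar Rel (a + b) D"
  shows "definable ar Rel (b + a) {ws. length ws = b + a \<and> drop b ws @ take b ws \<in> D}"
proof -
  have "definable ar Rel (b + a) {ws. length ws = b + a \<and> rotate b ws \<in> D}"
    using def_rotate[of ar Rel "b + a" D b] assms by (simp add: add.commute)
  moreover have "{ws. length ws = b + a \<and> rotate b ws \<in> D} = {ws. length ws = b + a \<and> drop b ws @ take b ws \<in> D}"
    by (auto simp: rot_eq)
  ultimately show ?thesis by simp
qed

lemma def_cyl_many: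
  assumes "definable ar Rel n D"
  shows "definable ar Rel (n + j) {ws. length ws = n + j \<and> take n ws \<in> D}"
proof (induction j)
  case 0
  have "{ws. length ws = n + 0 \<and> take n ws \<in> D} = D" using def_len[OF assms] by auto
  then show ?case using assms by simp
next
  case (Suc j)
  have "definable ar Rel (Suc (n + j)) {xs. length xs = Suc (n + j) \<and> take (n + j) xs \<in> {ws. length ws = n + j \<and> take n ws \<in> D}}"
    using definable.cyl[OF Suc.IH] .
  moreover have "{xs. length xs = Suc (n + j) \<and> take (n + j) xs \<in> {ws. length ws = n + j \<and> take n ws \<in> D}}
     = {ws. length ws = n + Suc j \<and> take n ws \<in> D}"
    by (auto simp: min_def)
  ultimately show ?case by simp
qed

lemma def_last:
  assumes "definable ar Rel n C"
  shows "definable ar Rel (j + n) {ws. length ws = j + n \<and> drop j ws \<in> C}"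
proof -
  have "definable ar Rel (j + n) {ws. length ws = j + n \<and> drop j ws @ take j ws \<in> {ws. length ws = n + j \<and> take n ws \<in> C}}"
    using def_swap[OF def_cyl_many[OF assms]] .
  moreover have "{ws. length ws = j + n \<and> drop j ws @ take j ws \<in> {ws. length ws = n + j \<and> take n ws \<in> C}}
      = {ws. length ws = j + n \<and> drop j ws \<in> C}"
  proof (rule Collect_cong)
    fix ws
    show "(length ws = j + n \<and> drop j ws @ take j ws \<in> {ws. length ws = n + j \<and> take n ws \<in> C}) =
      (length ws = j + n \<and> drop j ws \<in> C)"
    proof (cases "length ws = j + n")
      case True
      then have "take n (drop j ws @ take j ws) = drop j ws" by simp
      then show ?thesis using True by simp
    qed simp
  qed
  ultimately show ?thesis by simp
qed

lemma def_proj_many: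
  "definable ar Rel (n + k) D \<Longrightarrow>
   definable ar Rel n {xs. length xs = n \<and> (\<exists>zs. length zs = k \<and> xs @ zs \<in> D)}"
proof (induction k arbitrary: D)
  case 0
  have "{xs. length xs = n \<and> (\<exists>zs. length zs = 0 \<and> xs @ zs \<in> D)} = D" using def_len[OF 0[simplified]] by auto
  then show ?case using 0 by simp
next
  case (Suc k)
  have "definable ar Rel (n + k) {xs. length xs = n + k \<and> (\<exists>a. xs @ [a] \<in> D)}"
    using definable.proj[of ar Rel "n + k" D] Suc.prems by simp
  from Suc.IH[OF this]
  have "definable ar Rel n {xs. length xs = n \<and> (\<exists>zs. length zs = k \<and> xs @ zs \<in> {xs. length xs = n + k \<and> (\<exists>a. xs @ [a] \<in> D)})}" .
  moreover have "{xs. length xs = n \<and> (\<exists>zs. length zs = k \<and> xs @ zs \<in> {xs. length xs = n + k \<and> (\<exists>a. xs @ [a] \<in> D)})}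
     = {xs. length xs = n \<and> (\<exists>zs. length zs = Suc k \<and> xs @ zs \<in> D)}"
  proof (rule Collect_cong, rule iffI)
    fix xs assume "length xs = n \<and> (\<exists>zs. length zs = k \<and> xs @ zs \<in> {xs. length xs = n + k \<and> (\<exists>a. xs @ [a] \<in> D)})"
    then obtain zs a where "length xs = n" "length zs = k" "xs @ zs @ [a] \<in> D" by auto
    then show "length xs = n \<and> (\<exists>zs. length zs = Suc k \<and> xs @ zs \<in> D)"
      by (intro conjI exI[of _ "zs @ [a]"]) auto
  next
    fix xs assume "length xs = n \<and> (\<exists>zs. length zs = Suc k \<and> xs @ zs \<in> D)"
    then obtain zs where z: "length xs = n" "length zs = Suc k" "xs @ zs \<in> D" by auto
    then obtain zs' a where "zs = zs' @ [a]" by (metis length_Suc_conv_rev)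
    then show "length xs = n \<and> (\<exists>zs. length zs = k \<and> xs @ zs \<in> {xs. length xs = n + k \<and> (\<exists>a. xs @ [a] \<in> D)})"
      using z by (intro conjI exI[of _ zs']) auto
  qed
  ultimately show ?case by simp
qed

lemma def_fix_last:
  assumes "definable ar Rel (Suc N) D"
  shows "definable ar Rel N {xs. length xs = N \<and> xs @ [c] \<in> D}"
proof -
  have "definable ar Rel (N + 1) {ws. length ws = N + 1 \<and> drop N ws \<in> {[c]}}"
    using def_last[OF definable.param] .
  then have "definable ar Rel (Suc N) {ws. length ws = N + 1 \<and> drop N ws \<in> {[c]}}" by simp
  then have "definable ar Rel (Suc N) (D \<inter> {ws. length ws = N + 1 \<and> drop N ws \<in> {[c]}})"
    by (rule definable.inter[OF assms])
  from definable.proj[OF this]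
  have "definable ar Rel N {xs. length xs = N \<and> (\<exists>a. xs @ [a] \<in> D \<inter> {ws. length ws = N + 1 \<and> drop N ws \<in> {[c]}})}" .
  moreover have "{xs. length xs = N \<and> (\<exists>a. xs @ [a] \<in> D \<inter> {ws. length ws = N + 1 \<and> drop N ws \<in> {[c]}})}
     = {xs. length xs = N \<and> xs @ [c] \<in> D}"
  proof (rule Collect_cong)
    fix xs
    show "(length xs = N \<and> (\<exists>a. xs @ [a] \<in> D \<inter> {ws. length ws = N + 1 \<and> drop N ws \<in> {[c]}})) =
          (length xs = N \<and> xs @ [c] \<in> D)"
    proof (cases "length xs = N")
      case True
      then have "\<And>a. drop N (xs @ [a]) = [a]" by simp
      then show ?thesis using True by auto
    qed simp
  qed
  ultimately show ?thesis by simp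
qed

lemma def_fix_suffix:
  "definable ar Rel (n + length b) D \<Longrightarrow> definable ar Rel n {xs. length xs = n \<and> xs @ b \<in> D}"
proof (induction b arbitrary: D rule: rev_induct)
  case Nil
  have "{xs. length xs = n \<and> xs @ [] \<in> D} = D" using def_len[OF Nil[simplified]] by auto
  then show ?case using Nil by simp
next
  case (snoc c b)
  have "definable ar Rel (n + length b) {xs. length xs = n + length b \<and> xs @ [c] \<in> D}"
    using def_fix_last[of ar Rel "n + length b" D c] snoc.prems by simp
  from snoc.IH[OF this]
  have "definable ar Rel n {xs. length xs = n \<and> xs @ b \<in> {xs. length xs = n + length b \<and> xs @ [c] \<in> D}}" .
  moreover have "{xs. length xs = n \<and> xs @ b \<in> {xs. length xs = n + length b \<and> xs @ [c] \<in> D}}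
      = {xs. length xs = n \<and> xs @ b @ [c] \<in> D}" by auto
  ultimately show ?case by simp
qed





locale setting =
  fixes ar :: "'r \<Rightarrow> nat" and Rel :: "'r \<Rightarrow> 'a list set"
    and n :: nat and Gr :: "'a list monoid" and \<mu> :: "'a list set \<Rightarrow> real"
  assumes dg: "definable_group ar Rel n Gr"
    and km: "keisler_measure ar Rel n Gr \<mu>"
begin

lemma grp: "group Gr" using dg by (simp add: definable_group_def)

lemma carr_len: "x \<in> carrier Gr \<Longrightarrow> length x = n"
  using dg by (auto simp: definable_group_def)

lemma def_carr: "definable ar Rel n (carrier Gr)"
  using dg by (simp add: definable_group_def)

definition DC :: "'a list set \<Rightarrow> 'a list set" where
  "DC C = {ws. length ws = n + n \<and> take n ws \<in> carrier Gr \<and> drop n ws \<in> carrier Gr \<and>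
             take n ws \<otimes>\<^bsub>Gr\<^esub> drop n ws \<in> C}"

lemma def_DC:
  assumes C: "definable ar Rel n C"
  shows "definable ar Rel (n + n) (DC C)"
proof -
  let ?G3 = "{xs @ ys @ zs | xs ys zs. xs \<in> carrier Gr \<and> ys \<in> carrier Gr \<and> zs = xs \<otimes>\<^bsub>Gr\<^esub> ys}"
  let ?E = "{ws. length ws = (n + n) + n \<and> drop (n + n) ws \<in> C}"
  have g3: "definable ar Rel (n + n + n) ?G3" using dg by (simp add: definable_group_def)
  have e: "definable ar Rel (n + n + n) ?E" using def_last[OF C, of "n + n"] by simp
  have "definable ar Rel (n + n + n) (?G3 \<inter> ?E)" using definable.inter[OF g3 e] .
  from def_proj_many[of ar Rel "n + n" n, OF this]
  have d: "definable ar Rel (n + n) {ws. length ws = n + n \<and> (\<exists>zs. length zs = n \<and> ws @ zs \<in> ?G3 \<inter> ?E)}" .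
  have "{ws. length ws = n + n \<and> (\<exists>zs. length zs = n \<and> ws @ zs \<in> ?G3 \<inter> ?E)} = DC C"
    unfolding DC_def
  proof (rule Collect_cong, rule iffI)
    fix ws assume "length ws = n + n \<and> (\<exists>zs. length zs = n \<and> ws @ zs \<in> ?G3 \<inter> ?E)"
    then obtain zs xs ys zs' where l: "length ws = n + n" and lz: "length zs = n"
      and eq: "ws @ zs = xs @ ys @ zs'" and xs: "xs \<in> carrier Gr" and ys: "ys \<in> carrier Gr"
      and z': "zs' = xs \<otimes>\<^bsub>Gr\<^esub> ys" and inC: "drop (n + n) (ws @ zs) \<in> C"
      by blast
    have lx: "length xs = n" "length ys = n" using carr_len xs ys by auto
    have "ws @ zs = (xs @ ys) @ zs'" using eq by simp
    then have w: "ws = xs @ ys" and zz: "zs = zs'"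
      using l lx by (metis append_eq_append_conv length_append)+
    have "take n ws = xs" "drop n ws = ys" using w lx by auto
    moreover have "zs \<in> C" using inC l by simp
    ultimately show "length ws = n + n \<and> take n ws \<in> carrier Gr \<and> drop n ws \<in> carrier Gr \<and>
             take n ws \<otimes>\<^bsub>Gr\<^esub> drop n ws \<in> C"
      using l xs ys z' zz by simp
  next
    fix ws assume a: "length ws = n + n \<and> take n ws \<in> carrier Gr \<and> drop n ws \<in> carrier Gr \<and>
             take n ws \<otimes>\<^bsub>Gr\<^esub> drop n ws \<in> C"
    let ?z = "take n ws \<otimes>\<^bsub>Gr\<^esub> drop n ws"
    have zc: "?z \<in> carrier Gr" using a group.subgroup_self[OF grp] by (meson grp group.is_monoid monoid.m_closed)
    have "ws @ ?z \<in> ?G3"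
    proof -
      have "ws @ ?z = take n ws @ drop n ws @ ?z" by simp
      then show ?thesis using a by blast
    qed
    moreover have "ws @ ?z \<in> ?E" using a carr_len[OF zc] by simp
    ultimately show "length ws = n + n \<and> (\<exists>zs. length zs = n \<and> ws @ zs \<in> ?G3 \<inter> ?E)"
      using a carr_len[OF zc] by blast
  qed
  then show ?thesis using d by simp
qed

lemma translate_char:
  assumes h: "h \<in> carrier Gr" and C: "C \<subseteq> carrier Gr"
  shows "translate Gr h C = {z \<in> carrier Gr. inv\<^bsub>Gr\<^esub> h \<otimes>\<^bsub>Gr\<^esub> z \<in> C}"
proof -
  interpret group Gr by (rule grp)
  show ?thesis
  proof (intro equalityI subsetI)
    fix z assume "z \<in> translate Gr h C"
    then obtain c where c: "c \<in> C" "z = h \<otimes>\<^bsub>Gr\<^esub> c" by (auto simp: translate_def)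
    then have cc: "c \<in> carrier Gr" using C by auto
    then have "inv\<^bsub>Gr\<^esub> h \<otimes>\<^bsub>Gr\<^esub> z = c" using c h by (simp add: m_assoc[symmetric])
    then show "z \<in> {z \<in> carrier Gr. inv\<^bsub>Gr\<^esub> h \<otimes>\<^bsub>Gr\<^esub> z \<in> C}" using c cc h by auto
  next
    fix z assume z: "z \<in> {z \<in> carrier Gr. inv\<^bsub>Gr\<^esub> h \<otimes>\<^bsub>Gr\<^esub> z \<in> C}"
    then have "z = h \<otimes>\<^bsub>Gr\<^esub> (inv\<^bsub>Gr\<^esub> h \<otimes>\<^bsub>Gr\<^esub> z)" using h by (simp add: m_assoc[symmetric])
    then show "z \<in> translate Gr h C" using z by (auto simp: translate_def)
  qed
qed

lemma def_translate:
  assumes h: "h \<in> carrier Gr" and C: "def_subset ar Rel n Gr C"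
  shows "def_subset ar Rel n Gr (translate Gr h C)"
proof -
  interpret group Gr by (rule grp)
  have dC: "definable ar Rel n C" and sC: "C \<subseteq> carrier Gr" using C by (auto simp: def_subset_def)
  define S where "S = {ws. length ws = n + n \<and> drop n ws @ take n ws \<in> DC C}"
  have dS: "definable ar Rel (n + n) S" unfolding S_def using def_swap[OF def_DC[OF dC]] .
  have ih: "inv\<^bsub>Gr\<^esub> h \<in> carrier Gr" using h by simp
  have li: "length (inv\<^bsub>Gr\<^esub> h) = n" using carr_len[OF ih] .
  have "definable ar Rel (n + length (inv\<^bsub>Gr\<^esub> h)) S" using dS li by simp
  from def_fix_suffix[OF this]
  have d1: "definable ar Rel n {xs. length xs = n \<and> xs @ inv\<^bsub>Gr\<^esub> h \<in> S}" .
  have eq: "{xs. length xs = n \<and> xs @ inv\<^bsub>Gr\<^esub> h \<in> S} = translate Gr h C"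
    unfolding translate_char[OF h sC]
  proof (rule Set.set_eqI)
    fix xs
    show "(xs \<in> {xs. length xs = n \<and> xs @ inv\<^bsub>Gr\<^esub> h \<in> S}) =
          (xs \<in> {z \<in> carrier Gr. inv\<^bsub>Gr\<^esub> h \<otimes>\<^bsub>Gr\<^esub> z \<in> C})"
    proof (cases "length xs = n")
      case True
      have "drop n (xs @ inv\<^bsub>Gr\<^esub> h) = inv\<^bsub>Gr\<^esub> h" using True by simp
      moreover have "take n (xs @ inv\<^bsub>Gr\<^esub> h) = xs" using True by simp
      ultimately have "(xs @ inv\<^bsub>Gr\<^esub> h \<in> S) = (inv\<^bsub>Gr\<^esub> h @ xs \<in> DC C)"
        using True li unfolding S_def by simp
      also have "\<dots> = (xs \<in> carrier Gr \<and> inv\<^bsub>Gr\<^esub> h \<otimes>\<^bsub>Gr\<^esub> xs \<in> C)"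
        unfolding DC_def using True li ih by simp
      finally show ?thesis using True by simp
    next
      case False
      then show ?thesis using carr_len by auto
    qed
  qed
  show ?thesis unfolding def_subset_def
  proof
    show "definable ar Rel n (translate Gr h C)" using d1 eq by simp
    show "translate Gr h C \<subseteq> carrier Gr" unfolding translate_char[OF h sC] by blast
  qed
qed

lemma def_empty: "definable ar Rel n {}"
proof -
  have "definable ar Rel n (carrier Gr \<inter> ({xs. length xs = n} - carrier Gr))"
    by (intro definable.inter definable.compl def_carr)
  then show ?thesis by (metis Diff_disjoint inf_commute Int_Diff)
qed

lemma def_union:
  assumes "definable ar Rel n A" "definable ar Rel n B"
  shows "definable ar Rel n (A \<union> B)"
proof -
  have "definable ar Rel n ({xs. length xs = n} - (({xs. length xs = n} - A) \<inter> ({xs. length xs = n} - B)))"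
    by (intro definable.inter definable.compl assms)
  moreover have "{xs. length xs = n} - (({xs. length xs = n} - A) \<inter> ({xs. length xs = n} - B)) = A \<union> B"
    using def_len[OF assms(1)] def_len[OF assms(2)] by auto
  ultimately show ?thesis by simp
qed

lemma mu_empty: "\<mu> {} = 0"
proof -
  have "def_subset ar Rel n Gr {}" using def_empty by (simp add: def_subset_def)
  then have "\<mu> ({} \<union> {}) = \<mu> {} + \<mu> {}" using km unfolding keisler_measure_def by blast
  then show ?thesis by simp
qed

lemma mu_sum:
  assumes "finite Q" "\<forall>C\<in>Q. def_subset ar Rel n Gr C" "pairwise disjnt Q"
  shows "def_subset ar Rel n Gr (\<Union>Q) \<and> \<mu> (\<Union>Q) = (\<Sum>C\<in>Q. \<mu> C)"
  using assms
proof (induction Q rule: finite_induct)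
  case empty
  then show ?case using def_empty mu_empty by (simp add: def_subset_def)
next
  case (insert C Q)
  have ih: "def_subset ar Rel n Gr (\<Union>Q)" "\<mu> (\<Union>Q) = (\<Sum>C\<in>Q. \<mu> C)"
    using insert by (auto simp: pairwise_insert)
  have c: "def_subset ar Rel n Gr C" using insert by simp
  have dj: "C \<inter> \<Union>Q = {}" using insert.prems(2) insert.hyps(2)
    by (auto simp: pairwise_insert disjnt_def)
  have "def_subset ar Rel n Gr (C \<union> \<Union>Q)" using ih c def_union by (auto simp: def_subset_def)
  moreover have "\<mu> (C \<union> \<Union>Q) = \<mu> C + \<mu> (\<Union>Q)" using km ih c dj by (auto simp: keisler_measure_def)
  ultimately show ?case using ih insert.hyps by simp
qed

end




lemma pajor:
  assumes "finite A" "T \<subseteq> Pow A"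
  shows "card T \<le> card {B. B \<subseteq> A \<and> shatters T B}"
  using assms
proof (induction A arbitrary: T rule: finite_induct)
  case empty
  then have sub: "T \<subseteq> {{}}" by auto
  show ?case
  proof (cases "T = {}")
    case True then show ?thesis by simp
  next
    case False
    then have "T = {{}}" using sub by blast
    moreover have "shatters {{}} {}" by (simp add: shatters_def)
    ultimately have "{B. B \<subseteq> {} \<and> shatters T B} = {{}}" by auto
    then show ?thesis using \<open>T = {{}}\<close> by simp
  qed
next
  case (insert x A)
  define Ta where "Ta = {t \<in> T. x \<notin> t}"
  define Tb where "Tb = (\<lambda>t. t - {x}) ` {t \<in> T. x \<in> t}"
  define T1 where "T1 = Ta \<union> Tb"
  define T2 where "T2 = Ta \<inter> Tb"
  define Tx where "Tx = {t \<in> T. x \<in> t}"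
  have fin: "finite T"
    using finite_subset[OF insert.prems] insert.hyps(1) by simp
  have fTa: "finite Ta" unfolding Ta_def using fin by simp
  have fTx: "finite Tx" unfolding Tx_def using fin by simp
  have fTb: "finite Tb" unfolding Tb_def using fin by simp
  have T1A: "T1 \<subseteq> Pow A" and T2A: "T2 \<subseteq> Pow A"
    using insert.prems by (auto simp: T1_def T2_def Ta_def Tb_def)
  have cTb: "card Tb = card Tx"
    unfolding Tb_def Tx_def by (rule card_image) (auto simp: inj_on_def)
  have TT: "T = Ta \<union> Tx" by (auto simp: Ta_def Tx_def)
  have "card (Ta \<union> Tx) = card Ta + card Tx"
    by (rule card_Un_disjoint[OF fTa fTx]) (auto simp: Ta_def Tx_def)
  then have "card T = card Ta + card Tx" using TT by simp
  also have "\<dots> = card T1 + card T2"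
    unfolding T1_def T2_def using cTb card_Un_Int[OF fTa fTb] by simp
  finally have cT: "card T = card T1 + card T2" .
  let ?S = "\<lambda>T. {B. B \<subseteq> A \<and> shatters T B}"
  have h1: "card T1 \<le> card (?S T1)" by (rule insert.IH[OF T1A])
  have h2: "card T2 \<le> card (?S T2)" by (rule insert.IH[OF T2A])
  have s1: "?S T1 \<subseteq> {B. B \<subseteq> insert x A \<and> shatters T B \<and> x \<notin> B}"
  proof
    fix B assume B: "B \<in> ?S T1"
    have BA: "B \<subseteq> A" and shB: "shatters T1 B" using B by auto
    have xB: "x \<notin> B" using BA insert.hyps(2) by blast
    have "shatters T B"
      unfolding shatters_def
    proof (intro allI impI)
      fix B' assume "B' \<subseteq> B"
      then obtain S where S: "S \<in> T1" "S \<inter> B = B'" using shB unfolding shatters_def by blast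
      have "\<exists>t\<in>T. S = t - {x}"
      proof (cases "S \<in> Ta")
        case True then have "S \<in> T" "x \<notin> S" by (auto simp: Ta_def)
        then show ?thesis by (intro bexI[of _ S]) auto
      next
        case False then have "S \<in> Tb" using S(1) by (simp add: T1_def)
        then show ?thesis unfolding Tb_def by blast
      qed
      then obtain t where t: "t \<in> T" "S = t - {x}" by blast
      have "t \<inter> B = B'" using t(2) S(2) xB by blast
      then show "\<exists>S\<in>T. S \<inter> B = B'" using t(1) by blast
    qed
    then show "B \<in> {B. B \<subseteq> insert x A \<and> shatters T B \<and> x \<notin> B}" using BA xB by blast
  qed
  have s2: "insert x ` ?S T2 \<subseteq> {B. B \<subseteq> insert x A \<and> shatters T B \<and> x \<in> B}"
  proof
    fix B0 assume "B0 \<in> insert x ` ?S T2"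
    then obtain B where B: "B \<in> ?S T2" and B0: "B0 = insert x B" by blast
    have BA: "B \<subseteq> A" and shB: "shatters T2 B" using B by auto
    have xB: "x \<notin> B" using BA insert.hyps(2) by blast
    have "shatters T (insert x B)"
      unfolding shatters_def
    proof (intro allI impI)
      fix B' assume B': "B' \<subseteq> insert x B"
      then have "B' - {x} \<subseteq> B" by blast
      then obtain S where S: "S \<in> T2" "S \<inter> B = B' - {x}" using shB unfolding shatters_def by blast
      have "S \<in> Ta" "S \<in> Tb" using S(1) by (auto simp: T2_def)
      then have xS: "x \<notin> S" and ST: "S \<in> T" by (auto simp: Ta_def)
      have "\<exists>t\<in>T. x \<in> t \<and> S = t - {x}" using \<open>S \<in> Tb\<close> unfolding Tb_def by blast
      then obtain t where t: "t \<in> T" "x \<in> t" "S = t - {x}" by blast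
      show "\<exists>S\<in>T. S \<inter> insert x B = B'"
      proof (cases "x \<in> B'")
        case True
        have "t \<inter> insert x B = B'" using True t(2,3) S(2) B' by blast
        then show ?thesis using t(1) by blast
      next
        case False
        have "S \<inter> insert x B = B'" using False xS S(2) B' by blast
        then show ?thesis using ST by blast
      qed
    qed
    then show "B0 \<in> {B. B \<subseteq> insert x A \<and> shatters T B \<and> x \<in> B}" using BA B0 by blast
  qed
  have inj: "inj_on (insert x) (?S T2)"
  proof (rule inj_onI)
    fix B B' assume "B \<in> ?S T2" "B' \<in> ?S T2" "insert x B = insert x B'"
    moreover then have "x \<notin> B" "x \<notin> B'" using insert.hyps(2) by auto
    ultimately show "B = B'" using insert_ident by metis
  qed
  let ?U = "{B. B \<subseteq> insert x A \<and> shatters T B \<and> x \<notin> B}"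
  let ?V = "{B. B \<subseteq> insert x A \<and> shatters T B \<and> x \<in> B}"
  let ?W = "{B. B \<subseteq> insert x A \<and> shatters T B}"
  have fW: "finite ?W" by (rule finite_subset[of _ "Pow (insert x A)"]) (use insert.hyps(1) in auto)
  have fU: "finite ?U" by (rule finite_subset[OF _ fW]) blast
  have fV: "finite ?V" by (rule finite_subset[OF _ fW]) blast
  have "card T \<le> card (?S T1) + card (insert x ` ?S T2)"
    using cT h1 h2 card_image[OF inj] by simp
  also have "\<dots> \<le> card ?U + card ?V"
    by (rule add_mono; rule card_mono) (use s1 s2 fU fV in auto)
  also have "\<dots> = card ?W"
  proof -
    have "?W = ?U \<union> ?V" by blast
    moreover have "?U \<inter> ?V = {}" by blast
    ultimately show ?thesis using card_Un_disjoint[OF fU fV] by simp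
  qed
  finally show ?case .
qed

lemma card_small_subsets:
  assumes "finite A"
  shows "card {B. B \<subseteq> A \<and> card B \<le> d} \<le> (card A + 1) ^ d"
proof (induction d)
  case 0
  have "{B. B \<subseteq> A \<and> card B \<le> 0} \<subseteq> {{}}"
  proof
    fix B assume B: "B \<in> {B. B \<subseteq> A \<and> card B \<le> 0}"
    then have "finite B" using finite_subset assms by blast
    moreover have "card B = 0" using B by simp
    ultimately show "B \<in> {{}}" by simp
  qed
  from card_mono[OF _ this] show ?case by simp
next
  case (Suc d)
  let ?X = "\<lambda>d. {B. B \<subseteq> A \<and> card B \<le> d}"
  let ?f = "\<lambda>p. insert (fst p) (snd p)"
  have fX: "finite (?X d)" by (rule finite_subset[of _ "Pow A"]) (use assms in auto)
  have fP: "finite (A \<times> ?X d)" using fX assms by simp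
  have sub: "?X (Suc d) \<subseteq> ?X d \<union> ?f ` (A \<times> ?X d)"
  proof
    fix B assume B: "B \<in> ?X (Suc d)"
    have BA: "B \<subseteq> A" and cB1: "card B \<le> Suc d" using B by auto
    show "B \<in> ?X d \<union> ?f ` (A \<times> ?X d)"
    proof (cases "card B \<le> d")
      case True then show ?thesis using BA by blast
    next
      case False
      then have cB: "card B = Suc d" using cB1 by simp
      then have "B \<noteq> {}" by (metis card.empty nat.distinct(1))
      then obtain a where a: "a \<in> B" by blast
      have fB: "finite B" using BA assms finite_subset by blast
      have "card (B - {a}) = d" using cB a fB by simp
      then have "(a, B - {a}) \<in> A \<times> ?X d" using a BA by blast
      moreover have "B = ?f (a, B - {a})" using a by auto
      ultimately show ?thesis by blast
    qed
  qed
  have "card (?X (Suc d)) \<le> card (?X d \<union> ?f ` (A \<times> ?X d))"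
    by (rule card_mono[OF _ sub]) (use fX fP in simp)
  also have "\<dots> \<le> card (?X d) + card (?f ` (A \<times> ?X d))" by (rule card_Un_le)
  also have "\<dots> \<le> card (?X d) + card (A \<times> ?X d)" using card_image_le[OF fP, of ?f] by simp
  also have "\<dots> = (card A + 1) * card (?X d)" by (simp add: card_cartesian_product)
  also have "\<dots> \<le> (card A + 1) * (card A + 1) ^ d" using Suc.IH by (rule mult_le_mono2)
  finally show ?case by simp
qed

lemma sauer:
  assumes fA: "finite A" and vc: "\<forall>B. finite B \<and> shatters F B \<longrightarrow> card B \<le> d"
  shows "card ((\<lambda>S. S \<inter> A) ` F) \<le> (card A + 1) ^ d"
proof -
  let ?T = "(\<lambda>S. S \<inter> A) ` F"
  have "card ?T \<le> card {B. B \<subseteq> A \<and> shatters ?T B}" by (rule pajor[OF fA]) auto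
  also have "\<dots> \<le> card {B. B \<subseteq> A \<and> card B \<le> d}"
  proof (rule card_mono)
    show "finite {B. B \<subseteq> A \<and> card B \<le> d}" using fA by auto
    show "{B. B \<subseteq> A \<and> shatters ?T B} \<subseteq> {B. B \<subseteq> A \<and> card B \<le> d}"
    proof safe
      fix B assume B: "B \<subseteq> A" "shatters ?T B"
      have "shatters F B" using B unfolding shatters_def by (metis (no_types, lifting) Int_assoc image_iff inf.absorb_iff2)
      then show "card B \<le> d" using vc B fA finite_subset by blast
    qed
  qed
  also have "\<dots> \<le> (card A + 1) ^ d" by (rule card_small_subsets[OF fA])
  finally show ?thesis .
qed




lemma lim_aux: "(\<lambda>k. (c + e * ln (real k)) / real k) \<longlonglongrightarrow> (0::real)"
proof -
  have l1: "(\<lambda>k. ln (real k) / real k) \<longlonglongrightarrow> 0"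
    using filterlim_compose[OF ln_x_over_x_tendsto_0 filterlim_real_sequentially] by simp
  have l2: "(\<lambda>k. inverse (real k)) \<longlonglongrightarrow> 0" using lim_inverse_n by simp
  have "(\<lambda>k. c * inverse (real k) + e * (ln (real k) / real k)) \<longlonglongrightarrow> c * 0 + e * 0"
    by (intro tendsto_intros l1 l2)
  moreover have "(\<lambda>k. c * inverse (real k) + e * (ln (real k) / real k)) = (\<lambda>k. (c + e * ln (real k)) / real k)"
    by (simp add: divide_inverse distrib_right mult.assoc)
  ultimately show ?thesis by simp
qed

lemma entropy_bound:
  fixes p :: "'b \<Rightarrow> real"
  assumes fin: "finite Q" and nn: "\<forall>C\<in>Q. 0 \<le> p C" and s1: "(\<Sum>C\<in>Q. p C) = 1"
  shows "- (\<Sum>C \<in> Q. if p C = 0 then 0 else p C * ln (p C)) \<le> ln (real (card Q))"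
    and "0 \<le> - (\<Sum>C \<in> Q. if p C = 0 then 0 else p C * ln (p C))"
proof -
  have ne: "Q \<noteq> {}" using s1 by auto
  define N where "N = real (card Q)"
  have Npos: "N > 0" using fin ne by (simp add: N_def card_gt_0_iff)
  have trm: "- (if p C = 0 then 0 else p C * ln (p C)) \<le> p C * ln N + 1 / N - p C" if C: "C \<in> Q" for C
  proof (cases "p C = 0")
    case True then show ?thesis using Npos by simp
  next
    case False
    then have pp: "p C > 0" using nn C by force
    have "ln (1 / (N * p C)) \<le> 1 / (N * p C) - 1" by (rule ln_le_minus_one) (use pp Npos in simp)
    moreover have "ln (1 / (N * p C)) = - ln N - ln (p C)" using pp Npos by (simp add: ln_div ln_mult)
    ultimately have "- ln N - ln (p C) \<le> 1 / (N * p C) - 1" by simp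
    then have "p C * (- ln N - ln (p C)) \<le> p C * (1 / (N * p C) - 1)"
      using pp by (intro mult_left_mono) auto
    moreover have "p C * (- ln N - ln (p C)) = - (p C * ln (p C)) - p C * ln N" by (simp add: algebra_simps)
    moreover have "p C * (1 / (N * p C) - 1) = 1 / N - p C" using pp by (simp add: right_diff_distrib)
    ultimately have "- (p C * ln (p C)) \<le> p C * ln N + 1 / N - p C" by linarith
    then show ?thesis using False by simp
  qed
  have "- (\<Sum>C \<in> Q. if p C = 0 then 0 else p C * ln (p C)) = (\<Sum>C \<in> Q. - (if p C = 0 then 0 else p C * ln (p C)))"
    by (simp add: sum_negf)
  also have "\<dots> \<le> (\<Sum>C \<in> Q. p C * ln N + 1 / N - p C)" by (rule sum_mono) (use trm in blast)
  also have "\<dots> = (\<Sum>C \<in> Q. p C) * ln N + N * (1 / N) - (\<Sum>C \<in> Q. p C)"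
    by (simp add: sum.distrib sum_subtractf sum_distrib_right N_def)
  also have "\<dots> = ln N" using s1 Npos by simp
  finally show "- (\<Sum>C \<in> Q. if p C = 0 then 0 else p C * ln (p C)) \<le> ln (real (card Q))" by (simp add: N_def)
  have le1: "p C \<le> 1" if C: "C \<in> Q" for C
    using member_le_sum[of C Q p] C nn fin s1 by simp
  have "(\<Sum>C \<in> Q. if p C = 0 then 0 else p C * ln (p C)) \<le> (\<Sum>C \<in> Q. 0)"
  proof (rule sum_mono)
    fix C assume C: "C \<in> Q"
    show "(if p C = 0 then 0 else p C * ln (p C)) \<le> 0"
    proof (cases "p C = 0")
      case False
      then have "p C > 0" using nn C by force
      moreover have "ln (p C) \<le> 0" using le1[OF C] \<open>p C > 0\<close> by simp
      ultimately show ?thesis by (simp add: mult_nonneg_nonpos)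
    qed simp
  qed
  then show "0 \<le> - (\<Sum>C \<in> Q. if p C = 0 then 0 else p C * ln (p C))" by simp
qed




context setting
begin

definition atom :: "'a list \<Rightarrow> nat \<Rightarrow> (nat \<Rightarrow> 'a list set) \<Rightarrow> 'a list set" where
  "atom g k f = {z \<in> carrier Gr. \<forall>i<k. g [^]\<^bsub>Gr\<^esub> i \<otimes>\<^bsub>Gr\<^esub> z \<in> f i}"

lemma inv_pow_inv:
  assumes g: "g \<in> carrier Gr"
  shows "inv\<^bsub>Gr\<^esub> (inv\<^bsub>Gr\<^esub> g [^]\<^bsub>Gr\<^esub> (i::nat)) = g [^]\<^bsub>Gr\<^esub> i"
proof -
  interpret group Gr by (rule grp)
  show ?thesis using g by (simp add: nat_pow_inv)
qed

lemma join_char: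
  assumes g: "g \<in> carrier Gr" and P: "\<forall>C\<in>P. C \<subseteq> carrier Gr"
  shows "join_iter Gr g P k = {atom g k f | f. \<forall>i<k. f i \<in> P}"
proof -
  interpret group Gr by (rule grp)
  have eq: "carrier Gr \<inter> (\<Inter>i \<in> {..<k}. translate Gr (inv\<^bsub>Gr\<^esub> g [^]\<^bsub>Gr\<^esub> i) (f i)) = atom g k f"
    if f: "\<forall>i<k. f i \<in> P" for f
  proof -
    have "translate Gr (inv\<^bsub>Gr\<^esub> g [^]\<^bsub>Gr\<^esub> i) (f i) = {z \<in> carrier Gr. g [^]\<^bsub>Gr\<^esub> i \<otimes>\<^bsub>Gr\<^esub> z \<in> f i}"
      if i: "i < k" for i
    proof -
      have h: "inv\<^bsub>Gr\<^esub> g [^]\<^bsub>Gr\<^esub> i \<in> carrier Gr" using g by simp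
      show ?thesis using translate_char[OF h] f i P inv_pow_inv[OF g] by simp
    qed
    then show ?thesis unfolding atom_def by auto
  qed
  show ?thesis unfolding join_iter_def
  proof (rule Collect_cong)
    fix Q
    show "(\<exists>f. Q = carrier Gr \<inter> (\<Inter>i \<in> {..<k}. translate Gr (inv\<^bsub>Gr\<^esub> g [^]\<^bsub>Gr\<^esub> i) (f i)) \<and> (\<forall>i<k. f i \<in> P)) =
          (\<exists>f. Q = atom g k f \<and> (\<forall>i<k. f i \<in> P))"
      using eq by metis
  qed
qed

lemma def_inter_many:
  "definable ar Rel n A \<Longrightarrow> (\<forall>i<(k::nat). definable ar Rel n (B i)) \<Longrightarrow>
   definable ar Rel n (A \<inter> (\<Inter>i \<in> {..<k}. B i))"
proof (induction k)
  case 0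
  then show ?case by simp
next
  case (Suc k)
  have "A \<inter> (\<Inter>i \<in> {..<Suc k}. B i) = (A \<inter> (\<Inter>i \<in> {..<k}. B i)) \<inter> B k"
    by (auto simp: lessThan_Suc)
  then show ?case using Suc definable.inter by (metis less_Suc_eq)
qed

lemma join_def_subset:
  assumes g: "g \<in> carrier Gr" and P: "def_partition ar Rel n Gr P"
    and Q: "Q \<in> join_iter Gr g P k"
  shows "def_subset ar Rel n Gr Q"
proof -
  interpret group Gr by (rule grp)
  obtain f where f: "\<forall>i<k. f i \<in> P"
    and Qe: "Q = carrier Gr \<inter> (\<Inter>i \<in> {..<k}. translate Gr (inv\<^bsub>Gr\<^esub> g [^]\<^bsub>Gr\<^esub> i) (f i))"
    using Q unfolding join_iter_def by blast
  have "\<forall>i<k. definable ar Rel n (translate Gr (inv\<^bsub>Gr\<^esub> g [^]\<^bsub>Gr\<^esub> i) (f i))"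
  proof (intro allI impI)
    fix i assume i: "i < k"
    have h: "inv\<^bsub>Gr\<^esub> g [^]\<^bsub>Gr\<^esub> i \<in> carrier Gr" using g by simp
    have "def_subset ar Rel n Gr (f i)" using P f i by (auto simp: def_partition_def)
    from def_translate[OF h this] show "definable ar Rel n (translate Gr (inv\<^bsub>Gr\<^esub> g [^]\<^bsub>Gr\<^esub> i) (f i))"
      by (simp add: def_subset_def)
  qed
  from def_inter_many[OF def_carr this] show ?thesis using Qe by (simp add: def_subset_def)
qed

lemma part_disj:
  assumes P: "def_partition ar Rel n Gr P" and C: "C \<in> P" "C' \<in> P" and x: "x \<in> C" "x \<in> C'"
  shows "C = C'"
  using P C x unfolding def_partition_def pairwise_def disjnt_def by blast

lemma atom_cong:
  assumes "\<forall>i<k. f i = f' i"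
  shows "atom g k f = atom g k f'"
  using assms unfolding atom_def by auto

lemma join_disjoint:
  assumes g: "g \<in> carrier Gr" and P: "def_partition ar Rel n Gr P"
  shows "pairwise disjnt (join_iter Gr g P k)"
proof -
  have PC: "\<forall>C\<in>P. C \<subseteq> carrier Gr" using P by (auto simp: def_partition_def def_subset_def)
  show ?thesis
    unfolding join_char[OF g PC] pairwise_def disjnt_def
  proof (intro ballI impI)
    fix Q1 Q2 assume Q1: "Q1 \<in> {atom g k f |f. \<forall>i<k. f i \<in> P}" and Q2: "Q2 \<in> {atom g k f |f. \<forall>i<k. f i \<in> P}"
      and ne: "Q1 \<noteq> Q2"
    obtain f1 where f1: "Q1 = atom g k f1" "\<forall>i<k. f1 i \<in> P" using Q1 by blast
    obtain f2 where f2: "Q2 = atom g k f2" "\<forall>i<k. f2 i \<in> P" using Q2 by blast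
    show "Q1 \<inter> Q2 = {}"
    proof (rule ccontr)
      assume "Q1 \<inter> Q2 \<noteq> {}"
      then obtain z where z1: "z \<in> atom g k f1" and z2: "z \<in> atom g k f2" using f1 f2 by blast
      have "\<forall>i<k. f1 i = f2 i"
      proof (intro allI impI)
        fix i assume i: "i < k"
        have "g [^]\<^bsub>Gr\<^esub> i \<otimes>\<^bsub>Gr\<^esub> z \<in> f1 i" "g [^]\<^bsub>Gr\<^esub> i \<otimes>\<^bsub>Gr\<^esub> z \<in> f2 i"
          using z1 z2 i unfolding atom_def by auto
        then show "f1 i = f2 i" using part_disj[OF P] f1(2) f2(2) i by blast
      qed
      then have "Q1 = Q2" using f1 f2 atom_cong by metis
      then show False using ne by simp
    qed
  qed
qed

lemma join_union:
  assumes g: "g \<in> carrier Gr" and P: "def_partition ar Rel n Gr P"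
  shows "\<Union>(join_iter Gr g P k) = carrier Gr"
proof -
  interpret group Gr by (rule grp)
  have PC: "\<forall>C\<in>P. C \<subseteq> carrier Gr" using P by (auto simp: def_partition_def def_subset_def)
  have UP: "\<Union>P = carrier Gr" using P by (simp add: def_partition_def)
  show ?thesis unfolding join_char[OF g PC]
  proof (intro equalityI subsetI)
    fix x assume "x \<in> \<Union>{atom g k f |f. \<forall>i<k. f i \<in> P}"
    then show "x \<in> carrier Gr" unfolding atom_def by blast
  next
    fix x assume x: "x \<in> carrier Gr"
    have "\<forall>i. \<exists>C\<in>P. g [^]\<^bsub>Gr\<^esub> (i::nat) \<otimes>\<^bsub>Gr\<^esub> x \<in> C"
    proof
      fix i :: nat
      have "g [^]\<^bsub>Gr\<^esub> i \<otimes>\<^bsub>Gr\<^esub> x \<in> carrier Gr" using g x by simp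
      then show "\<exists>C\<in>P. g [^]\<^bsub>Gr\<^esub> i \<otimes>\<^bsub>Gr\<^esub> x \<in> C" using UP by blast
    qed
    then obtain f where f: "\<forall>i. f i \<in> P \<and> g [^]\<^bsub>Gr\<^esub> (i::nat) \<otimes>\<^bsub>Gr\<^esub> x \<in> f i" by metis
    then have "x \<in> atom g k f" using x unfolding atom_def by blast
    then show "x \<in> \<Union>{atom g k f |f. \<forall>i<k. f i \<in> P}" using f by blast
  qed
qed

definition psi :: "'a list \<Rightarrow> nat \<Rightarrow> 'a list set set \<Rightarrow> 'a list \<Rightarrow> 'a list set" where
  "psi g k P x = {z \<in> carrier Gr. \<forall>i<k. \<forall>C\<in>P. g [^]\<^bsub>Gr\<^esub> i \<otimes>\<^bsub>Gr\<^esub> x \<in> C \<longrightarrow> g [^]\<^bsub>Gr\<^esub> i \<otimes>\<^bsub>Gr\<^esub> z \<in> C}"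

lemma join_sub_psi:
  assumes g: "g \<in> carrier Gr" and P: "def_partition ar Rel n Gr P"
  shows "join_iter Gr g P k \<subseteq> insert {} (psi g k P ` carrier Gr)"
proof
  have PC: "\<forall>C\<in>P. C \<subseteq> carrier Gr" using P by (auto simp: def_partition_def def_subset_def)
  fix Q assume "Q \<in> join_iter Gr g P k"
  then obtain f where Q: "Q = atom g k f" and f: "\<forall>i<k. f i \<in> P" unfolding join_char[OF g PC] by blast
  show "Q \<in> insert {} (psi g k P ` carrier Gr)"
  proof (cases "Q = {}")
    case False
    then obtain x where x: "x \<in> Q" by blast
    have xc: "x \<in> carrier Gr" using x Q unfolding atom_def by blast
    have "Q = psi g k P x"
    proof (intro equalityI subsetI)
      fix z assume z: "z \<in> Q"
      show "z \<in> psi g k P x" unfolding psi_def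
      proof (intro CollectI conjI allI impI ballI)
        show "z \<in> carrier Gr" using z Q unfolding atom_def by blast
        fix i C assume i: "i < k" and C: "C \<in> P" and xC: "g [^]\<^bsub>Gr\<^esub> i \<otimes>\<^bsub>Gr\<^esub> x \<in> C"
        have "g [^]\<^bsub>Gr\<^esub> i \<otimes>\<^bsub>Gr\<^esub> x \<in> f i" using x Q i unfolding atom_def by blast
        then have "C = f i" using part_disj[OF P C] f i xC by blast
        then show "g [^]\<^bsub>Gr\<^esub> i \<otimes>\<^bsub>Gr\<^esub> z \<in> C" using z Q i unfolding atom_def by blast
      qed
    next
      fix z assume z: "z \<in> psi g k P x"
      have "\<forall>i<k. g [^]\<^bsub>Gr\<^esub> i \<otimes>\<^bsub>Gr\<^esub> z \<in> f i"
      proof (intro allI impI)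
        fix i assume i: "i < k"
        have "g [^]\<^bsub>Gr\<^esub> i \<otimes>\<^bsub>Gr\<^esub> x \<in> f i" using x Q i unfolding atom_def by blast
        then show "g [^]\<^bsub>Gr\<^esub> i \<otimes>\<^bsub>Gr\<^esub> z \<in> f i" using z f i unfolding psi_def by blast
      qed
      then show "z \<in> Q" using z Q unfolding atom_def psi_def by blast
    qed
    then show ?thesis using xc by blast
  qed simp
qed

end




context setting
begin

definition phi :: "'a list \<Rightarrow> nat \<Rightarrow> 'a list set set \<Rightarrow> 'a list \<Rightarrow> 'a list set \<Rightarrow> 'a list set" where
  "phi g k P x = restrict (\<lambda>C. {y \<in> (\<lambda>i. g [^]\<^bsub>Gr\<^esub> i) ` {..<k}. y \<otimes>\<^bsub>Gr\<^esub> x \<in> C}) P"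

lemma psi_phi:
  assumes "phi g k P x = phi g k P y"
  shows "psi g k P x = psi g k P y"
proof -
  have key: "(g [^]\<^bsub>Gr\<^esub> i \<otimes>\<^bsub>Gr\<^esub> x \<in> C) = (g [^]\<^bsub>Gr\<^esub> i \<otimes>\<^bsub>Gr\<^esub> y \<in> C)" if i: "i < k" and C: "C \<in> P" for i C
  proof -
    have "phi g k P x C = phi g k P y C" using assms by simp
    then have "{y' \<in> (\<lambda>i. g [^]\<^bsub>Gr\<^esub> i) ` {..<k}. y' \<otimes>\<^bsub>Gr\<^esub> x \<in> C} = {y' \<in> (\<lambda>i. g [^]\<^bsub>Gr\<^esub> i) ` {..<k}. y' \<otimes>\<^bsub>Gr\<^esub> y \<in> C}"
      using C unfolding phi_def by simp
    moreover have "g [^]\<^bsub>Gr\<^esub> i \<in> (\<lambda>i. g [^]\<^bsub>Gr\<^esub> i) ` {..<k}" using i by blast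
    ultimately show ?thesis by blast
  qed
  show ?thesis unfolding psi_def using key by blast
qed

lemma card_join:
  assumes nip: "NIP ar Rel" and g: "g \<in> carrier Gr" and P: "def_partition ar Rel n Gr P"
  shows "\<exists>e. \<forall>k. finite (join_iter Gr g P k) \<and> card (join_iter Gr g P k) \<le> (k + 1) ^ e + 1"
proof -
  interpret group Gr by (rule grp)
  have fP: "finite P" using P by (simp add: def_partition_def)
  have PC: "\<forall>C\<in>P. C \<subseteq> carrier Gr" using P by (auto simp: def_partition_def def_subset_def)
  define F where "F C = {{xs. length xs = n \<and> xs @ ys \<in> DC C} | ys. length ys = n}" for C
  have "\<forall>C\<in>P. \<exists>d. \<forall>A. finite A \<and> shatters (F C) A \<longrightarrow> card A \<le> d"
  proof
    fix C assume C: "C \<in> P"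
    have "definable ar Rel n C" using P C by (auto simp: def_partition_def def_subset_def)
    from def_DC[OF this] have dd: "definable ar Rel (n + n) (DC C)" .
    have "\<forall>n m D. definable ar Rel (n + m) D \<longrightarrow>
        (\<exists>d::nat. \<forall>A. finite A \<and>
           shatters {{xs. length xs = n \<and> xs @ ys \<in> D} | ys. length ys = m} A
           \<longrightarrow> card A \<le> d)" using nip unfolding NIP_def .
    then have "\<exists>d::nat. \<forall>A. finite A \<and>
           shatters {{xs. length xs = n \<and> xs @ ys \<in> DC C} | ys. length ys = n} A
           \<longrightarrow> card A \<le> d" using dd by blast
    then show "\<exists>d. \<forall>A. finite A \<and> shatters (F C) A \<longrightarrow> card A \<le> d"
      unfolding F_def .
  qed
  then obtain d where d: "\<forall>C\<in>P. \<forall>A. finite A \<and> shatters (F C) A \<longrightarrow> card A \<le> d C"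
    by metis
  define e where "e = (\<Sum>C\<in>P. d C)"
  show ?thesis
  proof (intro exI allI)
    fix k :: nat
    define A where "A = (\<lambda>i. g [^]\<^bsub>Gr\<^esub> i) ` {..<k}"
    have fA: "finite A" unfolding A_def by (intro finite_imageI finite_lessThan)
    have cA: "card A \<le> k" unfolding A_def using card_image_le[of "{..<k}" "\<lambda>i. g [^]\<^bsub>Gr\<^esub> i"] by simp
    have AC: "A \<subseteq> carrier Gr" unfolding A_def using g by auto
    define T where "T C = (\<lambda>S. S \<inter> A) ` F C" for C
    have TA: "T C \<subseteq> Pow A" for C unfolding T_def by blast
    have fT: "finite (T C)" for C using finite_subset[OF TA] fA by simp
    have cT: "card (T C) \<le> (k + 1) ^ d C" if C: "C \<in> P" for C
    proof -
      have "card (T C) \<le> (card A + 1) ^ d C" unfolding T_def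
        by (rule sauer[OF fA]) (rule bspec[OF d C])
      also have "\<dots> \<le> (k + 1) ^ d C" using cA by (intro power_mono) auto
      finally show ?thesis .
    qed
    have phiPi: "phi g k P x \<in> PiE P T" if x: "x \<in> carrier Gr" for x
    proof -
      have lx: "length x = n" using carr_len[OF x] .
      have "phi g k P x C \<in> T C" if C: "C \<in> P" for C
      proof -
        have e1: "{y \<in> A. y \<otimes>\<^bsub>Gr\<^esub> x \<in> C} = {xs. length xs = n \<and> xs @ x \<in> DC C} \<inter> A"
        proof (intro equalityI subsetI)
          fix y assume y: "y \<in> {y \<in> A. y \<otimes>\<^bsub>Gr\<^esub> x \<in> C}"
          then have yc: "y \<in> carrier Gr" using AC by blast
          have ly: "length y = n" using carr_len[OF yc] .
          have "y @ x \<in> DC C" unfolding DC_def using ly lx yc x y by simp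
          then show "y \<in> {xs. length xs = n \<and> xs @ x \<in> DC C} \<inter> A" using ly y by blast
        next
          fix y assume y: "y \<in> {xs. length xs = n \<and> xs @ x \<in> DC C} \<inter> A"
          then have ly: "length y = n" and yD: "y @ x \<in> DC C" by auto
          then have "y \<otimes>\<^bsub>Gr\<^esub> x \<in> C" unfolding DC_def using ly by simp
          then show "y \<in> {y \<in> A. y \<otimes>\<^bsub>Gr\<^esub> x \<in> C}" using y by blast
        qed
        have e2: "{xs. length xs = n \<and> xs @ x \<in> DC C} \<in> F C" unfolding F_def using lx by blast
        have e3: "phi g k P x C = {y \<in> A. y \<otimes>\<^bsub>Gr\<^esub> x \<in> C}"
          using C unfolding phi_def A_def by simp
        show ?thesis unfolding T_def e3 e1 by (rule image_eqI[OF refl e2])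
      qed
      moreover have "phi g k P x C = undefined" if "C \<notin> P" for C
        using that unfolding phi_def by simp
      ultimately show ?thesis by (rule PiE_I)
    qed
    have fPi: "finite (PiE P T)" using fP fT by (simp add: finite_PiE)
    have "card (PiE P T) = (\<Prod>C\<in>P. card (T C))" using fP by (rule card_PiE)
    also have "\<dots> \<le> (\<Prod>C\<in>P. (k + 1) ^ d C)" by (rule prod_mono) (use cT in auto)
    also have "\<dots> = (k + 1) ^ e" unfolding e_def by (simp add: power_sum)
    finally have cPi: "card (PiE P T) \<le> (k + 1) ^ e" .
    define h where "h \<phi> = psi g k P (SOME x. x \<in> carrier Gr \<and> phi g k P x = \<phi>)" for \<phi>
    have psi_img: "psi g k P ` carrier Gr = h ` (phi g k P ` carrier Gr)"
    proof -
      have "h (phi g k P x) = psi g k P x" if x: "x \<in> carrier Gr" for x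
      proof -
        have "\<exists>x'. x' \<in> carrier Gr \<and> phi g k P x' = phi g k P x" using x by blast
        then have "phi g k P (SOME x'. x' \<in> carrier Gr \<and> phi g k P x' = phi g k P x) = phi g k P x"
          by (rule someI_ex[THEN conjunct2])
        then show ?thesis unfolding h_def by (rule psi_phi)
      qed
      then have "psi g k P ` carrier Gr = (h \<circ> phi g k P) ` carrier Gr"
        by (intro image_cong) auto
      then show ?thesis by (simp only: image_comp)
    qed
    have sub2: "phi g k P ` carrier Gr \<subseteq> PiE P T" by (rule image_subsetI) (rule phiPi)
    have fphi: "finite (phi g k P ` carrier Gr)" by (rule finite_subset[OF sub2 fPi])
    have cphi: "card (phi g k P ` carrier Gr) \<le> card (PiE P T)" by (rule card_mono[OF fPi sub2])
    have fpsi: "finite (psi g k P ` carrier Gr)" unfolding psi_img by (rule finite_imageI[OF fphi])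
    have cpsi: "card (psi g k P ` carrier Gr) \<le> card (phi g k P ` carrier Gr)"
      unfolding psi_img by (rule card_image_le[OF fphi])
    have fins: "finite (insert {} (psi g k P ` carrier Gr))" using fpsi by simp
    have sub: "join_iter Gr g P k \<subseteq> insert {} (psi g k P ` carrier Gr)" by (rule join_sub_psi[OF g P])
    have "card (join_iter Gr g P k) \<le> card (insert {} (psi g k P ` carrier Gr))"
      by (rule card_mono[OF fins sub])
    also have "\<dots> \<le> card (psi g k P ` carrier Gr) + 1" using fpsi by (simp add: card_insert_if)
    finally have "card (join_iter Gr g P k) \<le> (k + 1) ^ e + 1" using cpsi cphi cPi by linarith
    moreover have "finite (join_iter Gr g P k)" using finite_subset[OF sub fins] .
    ultimately show "finite (join_iter Gr g P k) \<and> card (join_iter Gr g P k) \<le> (k + 1) ^ e + 1" by blast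
  qed
qed

end




theorem mainTheorem3:
  fixes ar :: "'r \<Rightarrow> nat" and Rel :: "'r \<Rightarrow> 'a list set"
    and n :: nat and Gr :: "'a list monoid" and \<mu> :: "'a list set \<Rightarrow> real"
  assumes "NIP ar Rel"
    and "definable_group ar Rel n Gr"
    and "keisler_measure ar Rel n Gr \<mu>"
    and "invariant_measure ar Rel n Gr \<mu>"
  shows "\<forall>g \<in> carrier Gr. zero_entropy ar Rel n Gr \<mu> g"
proof -
  interpret setting ar Rel n Gr \<mu>
    by (rule setting.intro) (rule assms(2), rule assms(3))
  show ?thesis unfolding zero_entropy_def
  proof (intro ballI allI impI)
    fix g P assume g: "g \<in> carrier Gr" and P: "def_partition ar Rel n Gr P"
    obtain e where e: "\<forall>k. finite (join_iter Gr g P k) \<and> card (join_iter Gr g P k) \<le> (k + 1) ^ e + 1"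
      using card_join[OF assms(1) g P] by blast
    define c where "c = (1 + real e) * ln 2"
    define H where "H k = part_entropy \<mu> (join_iter Gr g P k)" for k
    have bound: "0 \<le> H k / real k \<and> H k / real k \<le> (c + real e * ln (real k)) / real k"
      if k: "k \<ge> 1" for k
    proof -
      let ?Q = "join_iter Gr g P k"
      have fQ: "finite ?Q" using e by blast
      have ds: "\<forall>C\<in>?Q. def_subset ar Rel n Gr C" using join_def_subset[OF g P] by blast
      have km1: "\<mu> (carrier Gr) = 1" and km2: "\<forall>U. def_subset ar Rel n Gr U \<longrightarrow> 0 \<le> \<mu> U"
        using km unfolding keisler_measure_def by blast+
      have nn: "\<forall>C\<in>?Q. 0 \<le> \<mu> C" using ds km2 by blast
      have "\<mu> (\<Union>?Q) = (\<Sum>C\<in>?Q. \<mu> C)" using mu_sum[OF fQ ds join_disjoint[OF g P]] by blast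
      moreover have "\<mu> (\<Union>?Q) = 1" using join_union[OF g P] km1 by simp
      ultimately have s1: "(\<Sum>C\<in>?Q. \<mu> C) = 1" by simp
      have Hk: "H k = - (\<Sum>C \<in> ?Q. if \<mu> C = 0 then 0 else \<mu> C * ln (\<mu> C))"
        unfolding H_def part_entropy_def by simp
      have H0: "0 \<le> H k" using entropy_bound(2)[OF fQ nn s1] Hk by simp
      have H1: "H k \<le> ln (real (card ?Q))" using entropy_bound(1)[OF fQ nn s1] Hk by simp
      have ne: "?Q \<noteq> {}" using s1 by auto
      have cpos: "card ?Q > 0" using fQ ne by (simp add: card_gt_0_iff)
      have "(k + 1) ^ e \<le> (2 * k) ^ e" using k by (intro power_mono) auto
      moreover have "1 \<le> (2 * k) ^ e" using k by simp
      moreover have "card ?Q \<le> (k + 1) ^ e + 1" using e by blast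
      ultimately have "card ?Q \<le> 2 * (2 * k) ^ e" by linarith
      then have "real (card ?Q) \<le> real (2 * (2 * k) ^ e)" by (rule of_nat_mono)
      moreover have "real (2 * (2 * k) ^ e) = 2 * (2 * real k) ^ e" by simp
      ultimately have "real (card ?Q) \<le> 2 * (2 * real k) ^ e" by simp
      then have "ln (real (card ?Q)) \<le> ln (2 * (2 * real k) ^ e)"
        using cpos k by (subst ln_le_cancel_iff) auto
      also have "\<dots> = ln 2 + real e * (ln 2 + ln (real k))"
        using k by (simp add: ln_mult ln_realpow distrib_left)
      also have "\<dots> = c + real e * ln (real k)" unfolding c_def by (simp add: algebra_simps)
      finally have "H k \<le> c + real e * ln (real k)" using H1 by linarith
      then have "H k / real k \<le> (c + real e * ln (real k)) / real k"
        using k by (intro divide_right_mono) auto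
      moreover have "0 \<le> H k / real k" using H0 by simp
      ultimately show ?thesis by blast
    qed
    have ev: "eventually (\<lambda>k. 0 \<le> H k / real k \<and> H k / real k \<le> (c + real e * ln (real k)) / real k) sequentially"
      using bound by (intro eventually_sequentiallyI[of 1]) blast
    have "(\<lambda>k. H k / real k) \<longlonglongrightarrow> 0"
    proof (rule tendsto_sandwich[of "\<lambda>k. 0" _ _ "\<lambda>k. (c + real e * ln (real k)) / real k"])
      show "eventually (\<lambda>k. 0 \<le> H k / real k) sequentially" using ev by (rule eventually_mono) blast
      show "eventually (\<lambda>k. H k / real k \<le> (c + real e * ln (real k)) / real k) sequentially"
        using ev by (rule eventually_mono) blast
      show "(\<lambda>k. 0::real) \<longlonglongrightarrow> 0" by simp
      show "(\<lambda>k. (c + real e * ln (real k)) / real k) \<longlonglongrightarrow> 0" by (rule lim_aux)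
    qed
    then show "(\<lambda>k. part_entropy \<mu> (join_iter Gr g P k) / real k) \<longlonglongrightarrow> 0"
      unfolding H_def .
  qed
qed



end
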